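(* Let $S\subseteq V$ with $|S|=\zeta$, and let $G$ be a $d$-colored $d$-regular graph on $V$ having a connected component $C$ with $C\subseteq S$ and $|C|\ge(1-\gamma)z$. Then the verifier $\mathcal{A}_{\mathsf{QMA}}$ described below, given the witness $|S\rangle=\frac{1}{\sqrt{|S|}}\sum_{v\in S}|v\rangle$ and oracle access to $G$, accepts with probability at least $1-3\sqrt{\gamma}$.
   Context: $N=2^n$ (sufficiently large), $|V|=N$; $d=100$, $\ell=N^{1/10}$, $\gamma=N^{-1/10}$, $z=N/\ell=N^{9/10}$, $\zeta=(1+\gamma)z$. A $d$-colored $d$-regular graph has exactly one incident edge of each color $\kappa\in[d]$ at each vertex (self-loops allowed); $G(j,\kappa)$ is the $\kappa$-neighbor of $j$, and the oracle is $|j,\kappa,z\rangle\mapsto|j,\kappa,z\oplus G(j,\kappa)\rangle$. Using two oracle calls one implements $U_{\mathrm{walk}}|j,\kappa\rangle=|G(j,\kappa),\kappa\rangle$ (and its controlled version). Let $|\bar 0_V\rangle=N^{-1/2}\sum_{j\in V}|j\rangle$ and $|\bar0_d\rangle=d^{-1/2}\sum_{\kappa\in[d]}|\kappa\rangle$. The verifier $\mathcal{A}_{\mathsf{QMA}}$ on witness register $W$ (state $|\psi\rangle$): prepare a control qubit in $|+\rangle$ and a color register in $|\bar0_d\rangle$; apply $U_{\mathrm{walk}}$ to $(W,\text{color})$ controlled on the control qubit; measure the control in the $\{|+\rangle,|-\rangle\}$ basis and the color register with $\{|\bar0_d\rangle\langle\bar0_d|,I-|\bar0_d\rangle\langle\bar0_d|\}$,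 rejecting unless the outcomes are $+$ and $\bar0_d$; then measure $W$ with $\{|\bar0_V\rangle\langle\bar0_V|,I-|\bar0_V\rangle\langle\bar0_V|\}$, rejecting on the first outcome and accepting otherwise. *)

theory Defs
  imports Complex_Main
begin

definition NN :: "nat \<Rightarrow> real" where "NN n = real ((2::nat) ^ n)"
definition ell :: "nat \<Rightarrow> real" where "ell n = NN n powr (1/10)"
definition gam :: "nat \<Rightarrow> real" where "gam n = NN n powr (-1/10)"
definition zz :: "nat \<Rightarrow> real" where "zz n = NN n / ell n"
definition zeta :: "nat \<Rightarrow> real" where "zeta n = (1 + gam n) * zz n"

text \<open>A d-colored d-regular graph on V, given by G j k = the k-neighbour of j:
  each vertex has exactly one incident edge of each colour k < d (self-loops allowed),
  i.e. the k-neighbour of the k-neighbour of j is j again.\<close>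
definition colored_regular :: "nat set \<Rightarrow> nat \<Rightarrow> (nat \<Rightarrow> nat \<Rightarrow> nat) \<Rightarrow> bool" where
  "colored_regular V d G \<longleftrightarrow> (\<forall>j\<in>V. \<forall>k<d. G j k \<in> V \<and> G (G j k) k = j)"

definition graph_adj :: "nat \<Rightarrow> (nat \<Rightarrow> nat \<Rightarrow> nat) \<Rightarrow> nat \<Rightarrow> nat \<Rightarrow> bool" where
  "graph_adj d G j u \<longleftrightarrow> (\<exists>k<d. G j k = u \<or> G u k = j)"

definition is_component :: "nat set \<Rightarrow> nat \<Rightarrow> (nat \<Rightarrow> nat \<Rightarrow> nat) \<Rightarrow> nat set \<Rightarrow> bool" where
  "is_component V d G C \<longleftrightarrow> (\<exists>v\<in>V. C = {u. (graph_adj d G)\<^sup>*\<^sup>* v u})"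

text \<open>Quantum states on (control qubit, witness register W, colour register):
  amplitude functions  control (bool: False = |0>, True = |1>)  => vertex => colour => complex.\<close>
type_synonym qstate = "bool \<Rightarrow> nat \<Rightarrow> nat \<Rightarrow> complex"

text \<open>|+> (x) |psi> (x) |0bar_d>\<close>
definition init_state :: "nat \<Rightarrow> (nat \<Rightarrow> complex) \<Rightarrow> qstate" where
  "init_state d psi b j k = (if k < d then psi j / complex_of_real (sqrt 2 * sqrt (real d)) else 0)"

text \<open>Controlled U_walk : |1,j,k> -> |1,G(j,k),k>, identity on control |0>.\<close>
definition ctrl_walk :: "nat set \<Rightarrow> (nat \<Rightarrow> nat \<Rightarrow> nat) \<Rightarrow> qstate \<Rightarrow> qstate" where
  "ctrl_walk V G st b v k = (if b then (\<Sum>j\<in>{j\<in>V. G j k = v}. st True j k) else st False v k)"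

text \<open>Unnormalized state of W after projecting the control onto |+> and the colour onto |0bar_d>.\<close>
definition proj_plus_bar0 :: "nat \<Rightarrow> qstate \<Rightarrow> nat \<Rightarrow> complex" where
  "proj_plus_bar0 d st v =
     (\<Sum>b\<in>(UNIV::bool set). (\<Sum>k<d. st b v k / complex_of_real (sqrt 2 * sqrt (real d))))"

text \<open>Acceptance probability: squared norm of the W-state after the first projection,
  further projected onto the complement of |0bar_V>.\<close>
definition accept_prob :: "nat set \<Rightarrow> nat \<Rightarrow> (nat \<Rightarrow> nat \<Rightarrow> nat) \<Rightarrow> (nat \<Rightarrow> complex) \<Rightarrow> real" where
  "accept_prob V d G psi =
     (let phi = proj_plus_bar0 d (ctrl_walk V G (init_state d psi));
          avg = (\<Sum>u\<in>V. phi u) / of_nat (card V)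
      in (\<Sum>v\<in>V. (cmod (phi v - avg))\<^sup>2))"

definition subset_state :: "nat set \<Rightarrow> nat \<Rightarrow> complex" where
  "subset_state S v = (if v \<in> S then complex_of_real (1 / sqrt (real (card S))) else 0)"

end

theory Submission
  imports Defs
begin

lemma phi_val:
  fixes V :: "nat set" and d :: nat and G and p :: "nat \<Rightarrow> real"
  assumes cr: "colored_regular V d G" and v: "v \<in> V"
  shows "proj_plus_bar0 d (ctrl_walk V G (init_state d (\<lambda>x. complex_of_real (p x)))) v
       = complex_of_real (\<Sum>k<d. (p v + p (G v k)) / (2 * real d))"
proof -
  have set: "{j\<in>V. G j k = v} = {G v k}" if "k < d" for k
    using cr v that unfolding colored_regular_def by force
  have c: "complex_of_real (sqrt 2 * sqrt (real d)) * complex_of_real (sqrt 2 * sqrt (real d)) = of_real (2 * real d)"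
    by (simp flip: of_real_mult add: real_sqrt_mult[symmetric])
  have "proj_plus_bar0 d (ctrl_walk V G (init_state d (\<lambda>x. complex_of_real (p x)))) v
     = (\<Sum>k<d. (of_real (p v) + of_real (p (G v k))) / (complex_of_real (sqrt 2 * sqrt (real d)) * complex_of_real (sqrt 2 * sqrt (real d))))"
    unfolding proj_plus_bar0_def UNIV_bool ctrl_walk_def
    by (simp add: set init_state_def sum.distrib add_divide_distrib)
  also have "\<dots> = complex_of_real (\<Sum>k<d. (p v + p (G v k)) / (2 * real d))"
    unfolding c by simp
  finally show ?thesis .
qed

lemma key:
  fixes V S C :: "nat set" and d :: nat and G
  assumes fin: "finite V" and SV: "S \<subseteq> V" and cr: "colored_regular V d G" and dpos: "d > 0"
    and CS: "C \<subseteq> S" and closed: "\<forall>u\<in>C. \<forall>k<d. G u k \<in> C" and sp: "card S > 0"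
  shows "real (card C) / real (card S) - real (card S) / real (card V) \<le> accept_prob V d G (subset_state S)"
proof -
  define s where "s = real (card S)"
  have s0: "s > 0" using sp s_def by simp
  define q where "q v = (if v \<in> S then 1 / sqrt s else 0)" for v
  have ps: "subset_state S = (\<lambda>x. complex_of_real (q x))"
    by (rule ext) (simp add: subset_state_def q_def s_def)
  define f where "f v = (\<Sum>k<d. (q v + q (G v k)) / (2 * real d))" for v
  define phi where "phi = proj_plus_bar0 d (ctrl_walk V G (init_state d (subset_state S)))"
  have phi: "phi v = complex_of_real (f v)" if "v \<in> V" for v
    unfolding phi_def ps f_def using phi_val[OF cr that] .
  have sumqG: "(\<Sum>v\<in>V. q (G v k)) = (\<Sum>v\<in>V. q v)" if "k < d" for k
  proof -
    have "bij_betw (\<lambda>v. G v k) V V"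
      by (rule bij_betw_byWitness[where f'="\<lambda>v. G v k"]) (use cr that in \<open>auto simp: colored_regular_def\<close>)
    then show ?thesis by (rule sum.reindex_bij_betw)
  qed
  have sumq: "(\<Sum>v\<in>V. q v) = sqrt s"
  proof -
    have "(\<Sum>v\<in>V. q v) = (\<Sum>v\<in>S. q v)"
      by (rule sum.mono_neutral_right) (use fin SV in \<open>auto simp: q_def\<close>)
    also have "\<dots> = s / sqrt s" by (simp add: q_def s_def)
    also have "\<dots> = sqrt s" using s0 by (simp add: real_div_sqrt)
    finally show ?thesis .
  qed
  have sumf: "(\<Sum>v\<in>V. f v) = sqrt s"
  proof -
    have "(\<Sum>v\<in>V. f v) = (\<Sum>k<d. (\<Sum>v\<in>V. q v) / (2 * real d) + (\<Sum>v\<in>V. q (G v k)) / (2 * real d))"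
      unfolding f_def by (subst sum.swap) (simp add: sum_divide_distrib sum.distrib add_divide_distrib)
    also have "\<dots> = (\<Sum>k<d. sqrt s / real d)"
      by (rule sum.cong) (auto simp: sumqG sumq)
    also have "\<dots> = sqrt s" using dpos by simp
    finally show ?thesis .
  qed
  have fC: "f v = 1 / sqrt s" if "v \<in> C" for v
  proof -
    have "f v = (\<Sum>k<d. (1 / sqrt s + 1 / sqrt s) / (2 * real d))"
      unfolding f_def by (rule sum.cong) (use that closed CS in \<open>auto simp: q_def\<close>)
    also have "\<dots> = 1 / sqrt s" using dpos by simp
    finally show ?thesis .
  qed
  define m where "m = (\<Sum>v\<in>V. f v) / real (card V)"
  have Vne: "card V > 0" using sp SV fin
    by (metis card_0_eq card_gt_0_iff rev_finite_subset subset_empty)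
  have acc: "accept_prob V d G (subset_state S) = (\<Sum>v\<in>V. (f v - m)^2)"
  proof -
    have avg: "(\<Sum>u\<in>V. phi u) / of_nat (card V) = complex_of_real m"
      by (simp add: phi m_def)
    show ?thesis
      unfolding accept_prob_def Let_def phi_def[symmetric] avg
      by (rule sum.cong) (simp_all add: phi flip: of_real_diff)
  qed
  have "(\<Sum>v\<in>V. (f v - m)^2) = (\<Sum>v\<in>V. (f v)^2) - 2 * m * (\<Sum>v\<in>V. f v) + real (card V) * m^2"
    by (simp add: power2_diff sum.distrib sum_subtractf sum_distrib_left sum_distrib_right mult_ac)
  also have "\<dots> = (\<Sum>v\<in>V. (f v)^2) - s / real (card V)"
    using Vne s0 unfolding m_def sumf by (simp add: field_simps power2_eq_square)
  finally have e: "(\<Sum>v\<in>V. (f v - m)^2) = (\<Sum>v\<in>V. (f v)^2) - s / real (card V)" .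
  have "(\<Sum>v\<in>C. (f v)^2) \<le> (\<Sum>v\<in>V. (f v)^2)"
    by (rule sum_mono2) (use fin CS SV in auto)
  moreover have "(\<Sum>v\<in>C. (f v)^2) = real (card C) / s"
    using s0 by (simp add: fC power_divide)
  ultimately show ?thesis using acc e s_def by simp
qed

lemma arith_fin:
  fixes g z c N :: real
  assumes g0: "0 < g" and g1: "g \<le> 1/2" and z0: "z > 0" and zN: "z = N * g"
    and c: "c \<ge> (1 - g) * z"
  shows "1 - 3 * sqrt g \<le> c / ((1 + g) * z) - ((1 + g) * z) / N"
proof -
  have N0: "N > 0" using zN z0 g0 by (metis zero_less_mult_pos2)
  have "c / ((1 + g) * z) \<ge> ((1 - g) * z) / ((1 + g) * z)"
    using c g0 z0 by (intro divide_right_mono) auto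
  moreover have "((1 - g) * z) / ((1 + g) * z) = (1 - g) / (1 + g)" using z0 by simp
  moreover have "(1 - g) / (1 + g) \<ge> 1 - 2 * g" using g0 by (simp add: field_simps)
  moreover have "((1 + g) * z) / N = (1 + g) * g" using N0 zN by simp
  moreover have "(1 + g) * g = g + g * g" by (simp add: algebra_simps)
  moreover have "3 * g + g * g \<le> 3 * sqrt g"
  proof -
    have t: "sqrt g * sqrt g = g" using g0 by simp
    have "sqrt g \<le> sqrt (1/2)" using g1 by simp
    also have "\<dots> \<le> 6/7" by (rule real_le_lsqrt) (auto simp: power2_eq_square)
    finally have "sqrt g \<le> 6/7" .
    moreover have "3 * g + g * g \<le> 7/2 * g" proof -
      have "g * g \<le> g * (1/2)" using g1 g0 by (intro mult_left_mono) auto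
      then show ?thesis by linarith
    qed
    moreover have "7/2 * g = (7/2 * sqrt g) * sqrt g" using t by simp
    moreover have "(7/2 * sqrt g) * sqrt g \<le> 3 * sqrt g"
      using \<open>sqrt g \<le> 6/7\<close> g0 by (intro mult_right_mono) auto
    ultimately show ?thesis by linarith
  qed
  ultimately show ?thesis by linarith
qed

lemma gam_facts:
  assumes n: "n \<ge> 10"
  shows "0 < gam n" "gam n \<le> 1/2" "zz n = NN n * gam n" "zz n > 0" "NN n > 0"
proof -
  have N0: "NN n > 0" by (simp add: NN_def)
  show "NN n > 0" by (rule N0)
  show g0: "0 < gam n" using N0 by (simp add: gam_def)
  have N1: "NN n \<ge> 1024"
  proof -
    have "(2::nat)^10 \<le> 2^n" using n by (intro power_increasing) auto
    then have "real ((2::nat)^10) \<le> real ((2::nat)^n)" by (simp only: of_nat_le_iff)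
    then show ?thesis unfolding NN_def by simp
  qed
  have "gam n \<le> 1024 powr (-1/10)"
    unfolding gam_def using N1 by (intro powr_mono2') auto
  also have "(1024::real) powr (-1/10) = (2 powr 10) powr (-1/10)" by simp
  also have "\<dots> = 1/2" by (simp add: powr_powr powr_minus_divide)
  finally show "gam n \<le> 1/2" .
  show zN: "zz n = NN n * gam n"
  proof -
    have e: "NN n powr (-(1/10)) = inverse (NN n powr (1/10))"
      by (rule powr_minus)
    have "zz n = NN n / NN n powr (1/10)" unfolding zz_def ell_def ..
    also have "\<dots> = NN n * inverse (NN n powr (1/10))" by (rule divide_inverse)
    also have "\<dots> = NN n * gam n" unfolding gam_def e[symmetric] by (simp only: minus_divide_left)
    finally show ?thesis .
  qed
  show "zz n > 0" using zN N0 g0 by simp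
qed

theorem corollary16:
  shows "\<exists>n0::nat. \<forall>n\<ge>n0. \<forall>(S::nat set) (G::nat \<Rightarrow> nat \<Rightarrow> nat) (C::nat set).
     S \<subseteq> {..<2^n} \<and> real (card S) = zeta n \<and>
     colored_regular {..<2^n} 100 G \<and> is_component {..<2^n} 100 G C \<and>
     C \<subseteq> S \<and> real (card C) \<ge> (1 - gam n) * zz n
     \<longrightarrow> accept_prob {..<2^n} 100 G (subset_state S) \<ge> 1 - 3 * sqrt (gam n)"
proof (intro exI[of _ 10] allI impI)
  fix n :: nat and S G C
  assume n: "10 \<le> n"
  assume H: "S \<subseteq> {..<2^n} \<and> real (card S) = zeta n \<and>
     colored_regular {..<2^n} 100 G \<and> is_component {..<2^n} 100 G C \<and>
     C \<subseteq> S \<and> real (card C) \<ge> (1 - gam n) * zz n"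
  note gf = gam_facts[OF n]
  have cS: "real (card S) = (1 + gam n) * zz n" using H by (simp add: zeta_def)
  have sp: "card S > 0"
  proof -
    have "(1 + gam n) * zz n > 0" using gf by simp
    then show ?thesis using cS by simp
  qed
  have closed: "\<forall>u\<in>C. \<forall>k<100. G u k \<in> C"
  proof -
    from H obtain v where C: "C = {u. (graph_adj 100 G)\<^sup>*\<^sup>* v u}"
      unfolding is_component_def by blast
    show ?thesis
    proof (intro ballI allI impI)
      fix u k assume u: "u \<in> C" and k: "k < (100::nat)"
      have "graph_adj 100 G u (G u k)" unfolding graph_adj_def using k by blast
      then show "G u k \<in> C" using u C by (auto intro: rtranclp.rtrancl_into_rtrancl)
    qed
  qed
  have "real (card C) / real (card S) - real (card S) / real (card {..<(2::nat)^n})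
        \<le> accept_prob {..<2^n} 100 G (subset_state S)"
    proof (rule key[OF _ _ _ _ _ closed sp])
      show "colored_regular {..<2 ^ n} 100 G" using H by blast
      show "S \<subseteq> {..<2 ^ n}" using H by blast
      show "C \<subseteq> S" using H by blast
    qed simp_all
  moreover have "real (card {..<(2::nat)^n}) = NN n" by (simp add: NN_def)
  moreover have "1 - 3 * sqrt (gam n) \<le> real (card C) / ((1 + gam n) * zz n) - ((1 + gam n) * zz n) / NN n"
    by (rule arith_fin) (use gf H in auto)
  ultimately show "accept_prob {..<2^n} 100 G (subset_state S) \<ge> 1 - 3 * sqrt (gam n)"
    using cS by simp
qed

end
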